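(* Let $n\ge2$. The family $\mathfrak U=\bigcup_{i=0}^{n-1}\mathfrak U_i$, where $\mathfrak U_i=\{g_i+x+V: x\in\Lambda\}$, is a cover of $\mathbb A^{n-1}$ by closed sets.
   Context: $\mathbb A^{n-1}=\{x\in\mathbb R^n:\sum_{i=1}^n x_i=0\}$ with the norm $\|x\|=\sum_i|x_i|$. For a nonempty proper subset $I\subset\{1,\dots,n\}$ with complement $I^c$, set $\phi_I(x)=\frac{\sum_{i\in I}x_i}{\#I}-\frac{\sum_{i\notin I}x_i}{\#I^c}$. Let $V=\{x\in\mathbb A^{n-1}:\phi_I(x)\le\tfrac12$ for all nonempty proper $I\}$ and $\Lambda=\mathbb A^{n-1}\cap\mathbb Z^n$. For $i=0,\dots,n-1$ let $g_i\in\mathbb A^{n-1}$ be the vector with coordinates $(g_i)_j=(i-n)/n$ for $j\le i$ and $(g_i)_j=i/n$ for $j>i$ (so $g_0=0$). *)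

theory Defs
  imports "HOL-Analysis.Analysis"
begin

text \<open>Points of R^n are modelled as functions nat => real, with coordinates
  indexed by {1..n} and all other coordinates equal to 0.\<close>

definition Aff :: "nat \<Rightarrow> (nat \<Rightarrow> real) set" where
  "Aff n = {x. (\<forall>j. j \<notin> {1..n} \<longrightarrow> x j = 0) \<and> (\<Sum>i=1..n. x i) = 0}"

definition l1dist :: "nat \<Rightarrow> (nat \<Rightarrow> real) \<Rightarrow> (nat \<Rightarrow> real) \<Rightarrow> real" where
  "l1dist n x y = (\<Sum>i=1..n. \<bar>x i - y i\<bar>)"

definition phi :: "nat \<Rightarrow> nat set \<Rightarrow> (nat \<Rightarrow> real) \<Rightarrow> real" where
  "phi n I x = (\<Sum>i\<in>I. x i) / real (card I)
             - (\<Sum>i\<in>{1..n} - I. x i) / real (card ({1..n} - I))"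

definition Vset :: "nat \<Rightarrow> (nat \<Rightarrow> real) set" where
  "Vset n = {x \<in> Aff n. \<forall>I. I \<subseteq> {1..n} \<and> I \<noteq> {} \<and> I \<noteq> {1..n} \<longrightarrow> phi n I x \<le> 1/2}"

definition Lat :: "nat \<Rightarrow> (nat \<Rightarrow> real) set" where
  "Lat n = {x \<in> Aff n. \<forall>j. x j \<in> \<int>}"

definition gvec :: "nat \<Rightarrow> nat \<Rightarrow> (nat \<Rightarrow> real)" where
  "gvec n i = (\<lambda>j. if j \<in> {1..n} then
                      (if j \<le> i then (real i - real n) / real n else real i / real n)
                    else 0)"

definition Ucell :: "nat \<Rightarrow> nat \<Rightarrow> (nat \<Rightarrow> real) \<Rightarrow> (nat \<Rightarrow> real) set" where
  "Ucell n i x = {y. \<exists>v\<in>Vset n. y = (\<lambda>j. gvec n i j + x j + v j)}"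

end

theory Submission
  imports Defs
begin


lemma l1_metric: "Metric_space (Aff n) (l1dist n)"
proof
  fix x y z
  show "0 \<le> l1dist n x y" unfolding l1dist_def by (simp add: sum_nonneg)
  show "l1dist n x y = l1dist n y x" unfolding l1dist_def by (simp add: abs_minus_commute)
  assume xy: "x \<in> Aff n" "y \<in> Aff n"
  show "(l1dist n x y = 0) = (x = y)"
  proof
    assume "l1dist n x y = 0"
    then have "\<forall>i\<in>{1..n}. \<bar>x i - y i\<bar> = 0" unfolding l1dist_def
      by (subst (asm) sum_nonneg_eq_0_iff) auto
    then show "x = y" using xy unfolding Aff_def by (auto intro!: ext)
  qed (simp add: l1dist_def)
  assume "z \<in> Aff n"
  show "l1dist n x z \<le> l1dist n x y + l1dist n y z" unfolding l1dist_def
  proof -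
    have "(\<Sum>i=1..n. \<bar>x i - z i\<bar>) \<le> (\<Sum>i=1..n. \<bar>x i - y i\<bar> + \<bar>y i - z i\<bar>)"
      by (intro sum_mono) linarith
    then show "(\<Sum>i=1..n. \<bar>x i - z i\<bar>) \<le> (\<Sum>i=1..n. \<bar>x i - y i\<bar>) + (\<Sum>i=1..n. \<bar>y i - z i\<bar>)"
      by (simp add: sum.distrib)
  qed
qed

lemma phi_diff: "phi n I a - phi n I b = phi n I (\<lambda>j. a j - b j)"
  unfolding phi_def sum_subtractf diff_divide_distrib by linarith

lemma avg_bound:
  fixes n :: nat
  assumes "J \<subseteq> {1..n}" "J \<noteq> {}"
  shows "\<bar>(\<Sum>i\<in>J. w i) / real (card J)\<bar> \<le> (\<Sum>i=1..n. \<bar>w i\<bar>)"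
proof -
  have fin: "finite J" by (rule finite_subset[OF assms(1)]) simp
  have c0: "card J > 0" using fin assms(2) by (simp add: card_gt_0_iff)
  then have c: "real (card J) \<ge> 1" by simp
  have "\<bar>(\<Sum>i\<in>J. w i) / real (card J)\<bar> = \<bar>\<Sum>i\<in>J. w i\<bar> / real (card J)" by (simp only: abs_divide abs_of_nat)
  also have "\<dots> \<le> \<bar>\<Sum>i\<in>J. w i\<bar>" using c mult_left_mono[OF c abs_ge_zero[of "\<Sum>i\<in>J. w i"]] by (simp add: pos_divide_le_eq)
  also have "\<dots> \<le> (\<Sum>i\<in>J. \<bar>w i\<bar>)" by (rule sum_abs)
  also have "\<dots> \<le> (\<Sum>i=1..n. \<bar>w i\<bar>)" by (rule sum_mono2) (use assms in auto)
  finally show ?thesis .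
qed

lemma phi_bound:
  assumes "I \<subseteq> {1..n}" "I \<noteq> {}" "I \<noteq> {1..n}"
  shows "\<bar>phi n I w\<bar> \<le> 2 * (\<Sum>i=1..n. \<bar>w i\<bar>)"
proof -
  have "{1..n} - I \<subseteq> {1..n}" "{1..n} - I \<noteq> {}" using assms by auto
  from avg_bound[OF this, of w] avg_bound[OF assms(1,2), of w] show ?thesis
    unfolding phi_def by linarith
qed

lemma Aff_add: "a \<in> Aff n \<Longrightarrow> b \<in> Aff n \<Longrightarrow> (\<lambda>j. a j + b j) \<in> Aff n"
  unfolding Aff_def by (auto simp: sum.distrib)

lemma Aff_diff: "a \<in> Aff n \<Longrightarrow> b \<in> Aff n \<Longrightarrow> (\<lambda>j. a j - b j) \<in> Aff n"
  unfolding Aff_def by (auto simp: sum_subtractf)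

lemma gvec_Aff: assumes "i < n" shows "gvec n i \<in> Aff n"
proof -
  have n: "n > 0" using assms by simp
  have "{1..n} = {1..i} \<union> {i+1..n}" using assms by auto
  then have "(\<Sum>j=1..n. gvec n i j) = (\<Sum>j=1..i. gvec n i j) + (\<Sum>j=i+1..n. gvec n i j)"
    by (simp add: sum.union_disjoint)
  also have "(\<Sum>j=1..i. gvec n i j) = (\<Sum>j=1..i. (real i - real n) / real n)"
    using assms by (intro sum.cong) (auto simp: gvec_def)
  also have "(\<Sum>j=i+1..n. gvec n i j) = (\<Sum>j=i+1..n. real i / real n)"
    using assms by (intro sum.cong) (auto simp: gvec_def)
  finally have "(\<Sum>j=1..n. gvec n i j) = real i * (real i - real n) / real n + real (n - i) * real i / real n"
    by simp
  also have "\<dots> = 0" using assms n by (simp add: of_nat_diff field_simps)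
  finally show ?thesis unfolding Aff_def by (auto simp: gvec_def)
qed

lemma Ucell_Aff: "i < n \<Longrightarrow> x \<in> Lat n \<Longrightarrow> Ucell n i x \<subseteq> Aff n"
  unfolding Ucell_def Lat_def Vset_def
  using Aff_add[OF Aff_add[OF gvec_Aff[of i n]]] by auto

lemma Ucell_closed:
  assumes "x \<in> Lat n" "i < n"
  shows "closedin (Metric_space.mtopology (Aff n) (l1dist n)) (Ucell n i x)"
proof -
  interpret M: Metric_space "Aff n" "l1dist n" by (rule l1_metric)
  define c where "c = (\<lambda>j. gvec n i j + x j)"
  have cA: "c \<in> Aff n" unfolding c_def using assms gvec_Aff[OF assms(2)] Aff_add unfolding Lat_def by auto
  have mem: "y \<in> Ucell n i x \<longleftrightarrow> (\<lambda>j. y j - c j) \<in> Vset n" for y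
  proof
    assume "y \<in> Ucell n i x"
    then obtain v where "v \<in> Vset n" "y = (\<lambda>j. gvec n i j + x j + v j)" unfolding Ucell_def by auto
    moreover have "(\<lambda>j. y j - c j) = v" using calculation unfolding c_def by auto
    ultimately show "(\<lambda>j. y j - c j) \<in> Vset n" by simp
  next
    assume "(\<lambda>j. y j - c j) \<in> Vset n"
    moreover have "y = (\<lambda>j. gvec n i j + x j + (y j - c j))" unfolding c_def by auto
    ultimately show "y \<in> Ucell n i x" unfolding Ucell_def by (intro CollectI bexI)
  qed
  show ?thesis unfolding M.closedin_metric
  proof (intro conjI allI impI)
    show "Ucell n i x \<subseteq> Aff n" using Ucell_Aff[OF assms(2,1)] .
    fix y assume y: "y \<in> Aff n - Ucell n i x"
    have yc: "(\<lambda>j. y j - c j) \<in> Aff n" using Aff_diff[of y n c] y cA by blast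
    have "(\<lambda>j. y j - c j) \<notin> Vset n" using y mem by blast
    then have "\<not> (\<forall>I. I \<subseteq> {1..n} \<and> I \<noteq> {} \<and> I \<noteq> {1..n} \<longrightarrow> phi n I (\<lambda>j. y j - c j) \<le> 1/2)"
      using yc unfolding Vset_def by blast
    then obtain I where I: "I \<subseteq> {1..n}" "I \<noteq> {}" "I \<noteq> {1..n}" "phi n I (\<lambda>j. y j - c j) > 1/2"
      by (auto simp: not_le)
    define r where "r = (phi n I (\<lambda>j. y j - c j) - 1/2) / 2"
    have "r > 0" using I(4) unfolding r_def by simp
    moreover have "disjnt (Ucell n i x) (M.mball y r)"
      unfolding disjnt_def
    proof (rule ccontr)
      assume "Ucell n i x \<inter> M.mball y r \<noteq> {}"
      then obtain z where z: "z \<in> Ucell n i x" "z \<in> Aff n" "l1dist n y z < r" by auto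
      have "\<bar>phi n I (\<lambda>j. (z j - c j) - (y j - c j))\<bar> \<le> 2 * (\<Sum>j=1..n. \<bar>(z j - c j) - (y j - c j)\<bar>)"
        by (rule phi_bound[OF I(1-3)])
      also have "(\<Sum>j=1..n. \<bar>(z j - c j) - (y j - c j)\<bar>) = l1dist n y z"
        unfolding l1dist_def by (intro sum.cong) auto
      finally have b: "- phi n I (\<lambda>j. (z j - c j) - (y j - c j)) \<le> 2 * l1dist n y z"
        by (rule abs_le_D2)
      have d: "phi n I (\<lambda>j. z j - c j) - phi n I (\<lambda>j. y j - c j) = phi n I (\<lambda>j. (z j - c j) - (y j - c j))"
        by (rule phi_diff)
      have gt: "phi n I (\<lambda>j. z j - c j) > 1/2"
      proof -
        have aux: "\<And>A B C l r. - C \<le> 2 * l \<Longrightarrow> A - B = C \<Longrightarrow> l < r \<Longrightarrow> 2 * r = B - 1/2 \<Longrightarrow> 1/2 < (A::real)"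
          by linarith
        have "2 * r = phi n I (\<lambda>j. y j - c j) - 1/2" unfolding r_def by simp
        then show ?thesis by (rule aux[OF b d z(3)])
      qed
      have "(\<lambda>j. z j - c j) \<in> Vset n" using z(1) mem by blast
      then have "phi n I (\<lambda>j. z j - c j) \<le> 1/2" using I(1-3) unfolding Vset_def by blast
      then show False using gt by linarith
    qed
    ultimately show "\<exists>r>0. disjnt (Ucell n i x) (M.mball y r)" by blast
  qed
qed



definition mz :: "nat \<Rightarrow> (nat \<Rightarrow> int) \<Rightarrow> real" where
  "mz n z = (\<Sum>j=1..n. real_of_int (z j)) / real n"

definition vv :: "nat \<Rightarrow> (nat \<Rightarrow> real) \<Rightarrow> (nat \<Rightarrow> int) \<Rightarrow> nat \<Rightarrow> real" where
  "vv n x z = (\<lambda>j. if j \<in> {1..n} then x j - real_of_int (z j) + mz n z else 0)"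

definition EE :: "nat \<Rightarrow> (nat \<Rightarrow> real) \<Rightarrow> (nat \<Rightarrow> int) \<Rightarrow> real" where
  "EE n x z = (\<Sum>j=1..n. (vv n x z j)^2)"

lemma vv_Aff: assumes "x \<in> Aff n" "n > 0" shows "vv n x z \<in> Aff n"
proof -
  have "(\<Sum>j=1..n. vv n x z j) = (\<Sum>j=1..n. x j) - (\<Sum>j=1..n. real_of_int (z j)) + real n * mz n z"
    unfolding vv_def by (simp add: sum.distrib sum_subtractf)
  also have "\<dots> = 0" using assms unfolding Aff_def mz_def by simp
  finally show ?thesis unfolding Aff_def vv_def by auto
qed

lemma phi_Aff:
  assumes "v \<in> Aff n" "I \<subseteq> {1..n}" "I \<noteq> {}" "I \<noteq> {1..n}"
  shows "phi n I v = (\<Sum>i\<in>I. v i) / real (card I) + (\<Sum>i\<in>I. v i) / (real n - real (card I))"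
proof -
  have fI: "finite I" using assms finite_subset by blast
  have "(\<Sum>i\<in>{1..n} - I. v i) = (\<Sum>i\<in>{1..n}. v i) - (\<Sum>i\<in>I. v i)"
    using assms by (simp add: sum_diff)
  also have "\<dots> = - (\<Sum>i\<in>I. v i)" using assms(1) unfolding Aff_def by simp
  moreover have "card I \<le> n" using card_mono[OF _ assms(2)] by simp
  ultimately show ?thesis unfolding phi_def using assms fI
    by (simp add: card_Diff_subset of_nat_diff)
qed

lemma phi_le:
  assumes "v \<in> Aff n" "I \<subseteq> {1..n}" "I \<noteq> {}" "I \<noteq> {1..n}"
    and le: "2 * (\<Sum>i\<in>I. v i) \<le> real (card I) * (real n - real (card I)) / real n"
  shows "phi n I v \<le> 1/2"
proof -
  have fI: "finite I" using assms finite_subset by blast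
  have k0: "card I > 0" using assms fI by (simp add: card_gt_0_iff)
  have "card I < card {1..n}" using assms by (intro psubset_card_mono) auto
  then have kn: "real (card I) < real n" by simp
  define S where "S = (\<Sum>i\<in>I. v i)"
  define k where "k = real (card I)"
  have k: "k > 0" "k < real n" using k0 kn unfolding k_def by auto
  have "phi n I v = S / k + S / (real n - k)" unfolding S_def k_def by (rule phi_Aff[OF assms(1-4)])
  also have "\<dots> = S * real n / (k * (real n - k))" using k by (simp add: field_simps)
  also have "\<dots> \<le> 1/2" using k le[folded S_def k_def]
    by (simp add: divide_le_eq field_simps)
  finally show ?thesis .
qed

lemma EE_step:
  assumes "I \<subseteq> {1..n}" "n > 0" "x \<in> Aff n"
  shows "EE n x (\<lambda>j. z j + (if j \<in> I then 1 else 0)) =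
         EE n x z - 2 * (\<Sum>i\<in>I. vv n x z i) + real (card I) * (real n - real (card I)) / real n"
proof -
  define k where "k = real (card I)"
  define w where "w = (\<lambda>j. (if j \<in> I then 1 else 0) - k / real n)"
  have fI: "finite I" using assms finite_subset by blast
  have indr: "(\<Sum>j=1..n. (if j \<in> I then 1::real else 0)) = k"
    using assms fI unfolding k_def by (simp add: sum.If_cases Int_absorb1)
  have indi: "(\<Sum>j=1..n. (if j \<in> I then 1::int else 0)) = int (card I)"
    using assms fI by (simp add: sum.If_cases Int_absorb1)
  have mz': "mz n (\<lambda>j. z j + (if j \<in> I then 1 else 0)) = mz n z + k / real n"
    unfolding mz_def k_def using indi
    by (simp add: sum.distrib add_divide_distrib of_int_sum[symmetric] del: of_int_sum)
  have vv': "vv n x (\<lambda>j. z j + (if j \<in> I then 1 else 0)) j = vv n x z j - w j" if "j \<in> {1..n}" for j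
    using that unfolding vv_def mz' w_def by auto
  have "EE n x (\<lambda>j. z j + (if j \<in> I then 1 else 0)) = (\<Sum>j=1..n. (vv n x z j - w j)^2)"
    unfolding EE_def by (intro sum.cong) (auto simp: vv')
  also have "\<dots> = (\<Sum>j=1..n. (vv n x z j)^2) - 2 * (\<Sum>j=1..n. vv n x z j * w j) + (\<Sum>j=1..n. (w j)^2)"
    by (simp add: power2_diff sum.distrib sum_subtractf sum_distrib_left mult.assoc)
  also have "(\<Sum>j=1..n. vv n x z j * w j) = (\<Sum>i\<in>I. vv n x z i)"
  proof -
    have "(\<Sum>j=1..n. vv n x z j * w j) = (\<Sum>j=1..n. (if j \<in> I then vv n x z j else 0)) - k / real n * (\<Sum>j=1..n. vv n x z j)"
    proof -
      have "vv n x z j * w j = (if j \<in> I then vv n x z j else 0) - k / real n * vv n x z j" for j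
        unfolding w_def by (cases "j \<in> I") (simp_all add: algebra_simps)
      then show ?thesis by (simp add: sum_subtractf sum_distrib_left)
    qed
    also have "(\<Sum>j=1..n. vv n x z j) = 0" using vv_Aff[OF assms(3,2)] unfolding Aff_def by simp
    also have "(\<Sum>j=1..n. (if j \<in> I then vv n x z j else 0)) = (\<Sum>i\<in>I. vv n x z i)"
      using assms fI by (simp add: sum.If_cases Int_absorb1)
    finally show ?thesis by simp
  qed
  also have "(\<Sum>j=1..n. (w j)^2) = k * (real n - k) / real n"
  proof -
    have "(\<Sum>j=1..n. (w j)^2) = (\<Sum>j=1..n. (if j \<in> I then 1 else 0) * (1 - 2 * k / real n)) + real n * (k / real n)^2"
    proof -
      have "(w j)^2 = (if j \<in> I then 1 else 0) * (1 - 2 * k / real n) + (k / real n)^2" for j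
        unfolding w_def by (cases "j \<in> I") (simp_all add: power2_diff)
      then show ?thesis by (simp add: sum.distrib)
    qed
    also have "\<dots> = k * (1 - 2 * k / real n) + real n * (k / real n)^2"
      by (simp only: sum_distrib_right[symmetric] indr)
    also have "\<dots> = k * (real n - k) / real n" using assms(2) by (simp add: field_simps power2_eq_square)
    finally show ?thesis .
  qed
  finally show ?thesis by (simp only: EE_def k_def)
qed



lemma mz_shift:
  assumes "\<forall>j\<in>{1..n}. z j = z' j + c" "n > 0"
  shows "mz n z = mz n z' + real_of_int c"
proof -
  have "(\<Sum>j=1..n. real_of_int (z j)) = (\<Sum>j=1..n. real_of_int (z' j) + real_of_int c)"
    using assms(1) by (intro sum.cong) auto
  also have "\<dots> = (\<Sum>j=1..n. real_of_int (z' j)) + real n * real_of_int c"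
    by (simp add: sum.distrib)
  finally show ?thesis unfolding mz_def using assms(2) by (simp add: add_divide_distrib)
qed

lemma vv_shift:
  assumes "\<forall>j\<in>{1..n}. z j = z' j + c" "n > 0"
  shows "vv n x z = vv n x z'"
  using assms mz_shift[OF assms] unfolding vv_def by (auto intro!: ext)

lemma abs_le_sq: "\<bar>v::real\<bar> \<le> 1 + v^2"
proof -
  have "0 \<le> (\<bar>v\<bar> - 1)^2" by simp
  then have "0 \<le> \<bar>v\<bar>^2 - 2 * \<bar>v\<bar> + 1" by (simp add: power2_diff)
  moreover have "\<bar>v\<bar>^2 = v^2" by simp
  moreover have "0 \<le> v^2" by simp
  ultimately show ?thesis by linarith
qed

lemma vv_bound:
  assumes "j \<in> {1..n}"
  shows "\<bar>vv n x z j\<bar> \<le> 1 + EE n x z"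
proof -
  have "(vv n x z j)^2 \<le> EE n x z" unfolding EE_def
    by (rule member_le_sum) (use assms in auto)
  then show ?thesis using abs_le_sq[of "vv n x z j"] by linarith
qed

lemma exists_min:
  assumes "n \<ge> 2" "x \<in> Aff n"
  shows "\<exists>zs. \<forall>z. EE n x zs \<le> EE n x z"
proof -
  have n0: "n > 0" using assms by simp
  define X where "X = (\<Sum>j=1..n. \<bar>x j\<bar>)"
  define E0 where "E0 = (\<Sum>j=1..n. (x j)^2)"
  define B where "B = \<lceil>2 * X + 2 + 2 * E0\<rceil>"
  define F where "F = (\<Pi>\<^sub>E j\<in>{1..n}. {-B..B})"
  have X0: "X \<ge> 0" unfolding X_def by (simp add: sum_nonneg)
  have E00: "E0 \<ge> 0" unfolding E0_def by (simp add: sum_nonneg)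
  have B0: "B \<ge> 0" unfolding B_def using X0 E00 by linarith
  have finF: "finite F" unfolding F_def by (intro finite_PiE) auto
  define z0 where "z0 = restrict (\<lambda>_. 0::int) {1..n}"
  have z0F: "z0 \<in> F" unfolding F_def z0_def using B0 by auto
  have mz0: "mz n z0 = 0" unfolding mz_def z0_def by simp
  have EE0: "EE n x z0 = E0" unfolding EE_def E0_def
  proof (intro sum.cong refl)
    fix j assume "j \<in> {1..n}"
    moreover have "z0 j = 0" using calculation unfolding z0_def by simp
    ultimately show "(vv n x z0 j)^2 = (x j)^2" unfolding vv_def mz0 by simp
  qed
  have neF: "F \<noteq> {}" using z0F by blast
  define m where "m = Min (EE n x ` F)"
  have "m \<in> EE n x ` F" unfolding m_def using finF neF by (intro Min_in) auto
  then obtain zs where zsF: "zs \<in> F" and zsm: "EE n x zs = m" by auto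
  have minF: "EE n x zs \<le> EE n x z" if "z \<in> F" for z
    unfolding zsm m_def using finF that by (intro Min_le) auto
  have "EE n x zs \<le> EE n x z" for z
  proof (cases "EE n x z \<le> E0")
    case False
    then show ?thesis using minF[OF z0F] EE0 by linarith
  next
    case True
    define z' where "z' = restrict (\<lambda>j. z j - z 1) {1..n}"
    have sh: "\<forall>j\<in>{1..n}. z j = z' j + z 1" unfolding z'_def by auto
    have vveq: "vv n x z = vv n x z'" by (rule vv_shift[OF sh n0])
    have 1: "1 \<in> {1..n}" using assms by auto
    have "z' \<in> F" unfolding F_def
    proof (rule PiE_I)
      fix j assume j: "j \<in> {1..n}"
      have vj: "vv n x z j = x j - real_of_int (z j) + mz n z" using j unfolding vv_def by simp
      have v1: "vv n x z 1 = x 1 - real_of_int (z 1) + mz n z" using 1 unfolding vv_def by simp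
      have "real_of_int (z' j) = (x j - vv n x z j) - (x 1 - vv n x z 1)"
        using j vj v1 unfolding z'_def by simp
      moreover have "\<bar>x j\<bar> \<le> X" "\<bar>x 1\<bar> \<le> X" unfolding X_def
        using j 1 by (auto intro!: member_le_sum)
      moreover have "\<bar>vv n x z j\<bar> \<le> 1 + E0" "\<bar>vv n x z 1\<bar> \<le> 1 + E0"
        using vv_bound[OF j, of x z] vv_bound[OF 1, of x z] True by linarith+
      ultimately have "\<bar>real_of_int (z' j)\<bar> \<le> 2 * X + 2 + 2 * E0" by linarith
      moreover have "2 * X + 2 + 2 * E0 \<le> real_of_int B" unfolding B_def by linarith
      ultimately have "\<bar>real_of_int (z' j)\<bar> \<le> real_of_int B" by linarith
      then show "z' j \<in> {-B..B}" by (simp add: abs_le_iff)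
    next
      fix j assume "j \<notin> {1..n}" then show "z' j = undefined" unfolding z'_def by (simp only: restrict_apply) simp
    qed
    then have "EE n x zs \<le> EE n x z'" by (rule minF)
    also have "EE n x z' = EE n x z" unfolding EE_def vveq ..
    finally show ?thesis .
  qed
  then show ?thesis by blast
qed

lemma ind_sum: assumes "i < n" shows "(\<Sum>j=1..n. (if j \<le> i then 1 else 0::real)) = real i"
proof -
  have "(\<Sum>j=1..n. (if j \<le> i then 1 else 0::real)) = real (card ({1..n} \<inter> {j. j \<le> i}))"
    by (simp add: sum.If_cases)
  also have "{1..n} \<inter> {j. j \<le> i} = {1..i}" using assms by auto
  finally show ?thesis by simp
qed

lemma cover:
  assumes "n \<ge> 2" "x \<in> Aff n"
  shows "\<exists>i<n. \<exists>lam\<in>Lat n. x \<in> Ucell n i lam"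
proof -
  have n0: "n > 0" using assms by simp
  obtain zs where glob: "\<And>z. EE n x zs \<le> EE n x z" using exists_min[OF assms] by blast
  define v where "v = vv n x zs"
  have vA: "v \<in> Aff n" unfolding v_def by (rule vv_Aff[OF assms(2) n0])
  have vV: "v \<in> Vset n" unfolding Vset_def
  proof (intro CollectI conjI allI impI vA)
    fix I assume I: "I \<subseteq> {1..n} \<and> I \<noteq> {} \<and> I \<noteq> {1..n}"
    have "EE n x zs \<le> EE n x (\<lambda>j. zs j + (if j \<in> I then 1 else 0))" by (rule glob)
    also have "\<dots> = EE n x zs - 2 * (\<Sum>i\<in>I. vv n x zs i) + real (card I) * (real n - real (card I)) / real n"
      using I by (intro EE_step n0 assms(2)) auto
    finally have "2 * (\<Sum>i\<in>I. v i) \<le> real (card I) * (real n - real (card I)) / real n"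
      unfolding v_def by linarith
    then show "phi n I v \<le> 1/2" using I vA by (intro phi_le) auto
  qed
  define s where "s = (\<Sum>j=1..n. zs j)"
  define i where "i = nat ((- s) mod int n)"
  have ii: "int i = (- s) mod int n" unfolding i_def using n0 by simp
  have iln: "i < n" using n0 unfolding i_def by (simp add: nat_less_iff)
  have "(s + int i) mod int n = 0" unfolding ii by (simp add: mod_add_right_eq)
  then obtain q where q: "s + int i = int n * q" by (metis dvd_def mod_0_imp_dvd)
  have qr: "real_of_int s + real i = real n * real_of_int q"
    using arg_cong[OF q, of real_of_int] by simp
  define lam where "lam = (\<lambda>j. if j \<in> {1..n} then real_of_int (zs j) + (if j \<le> i then 1 else 0) - real_of_int q else 0)"
  have lamL: "lam \<in> Lat n"
  proof -
    have "(\<Sum>j=1..n. lam j) = (\<Sum>j=1..n. real_of_int (zs j)) + (\<Sum>j=1..n. (if j \<le> i then 1 else 0::real)) - real n * real_of_int q"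
      unfolding lam_def by (simp add: sum.distrib sum_subtractf)
    also have "\<dots> = 0" using ind_sum[OF iln] qr unfolding s_def by simp
    finally have "(\<Sum>j=1..n. lam j) = 0" .
    moreover have "lam j \<in> \<int>" for j
      unfolding lam_def by (auto intro!: Ints_diff Ints_add Ints_of_int)
    ultimately show ?thesis unfolding Lat_def Aff_def lam_def by auto
  qed
  have mzs: "mz n zs = real_of_int s / real n" unfolding mz_def s_def by simp
  have "x = (\<lambda>j. gvec n i j + lam j + v j)"
  proof
    fix j
    show "x j = gvec n i j + lam j + v j"
    proof (cases "j \<in> {1..n}")
      case False
      then show ?thesis using assms(2) unfolding Aff_def gvec_def lam_def v_def vv_def by auto
    next
      case True
      have g: "gvec n i j + (if j \<le> i then 1 else 0) = real i / real n"
        unfolding gvec_def using True n0 by (auto simp: field_simps)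
      have "gvec n i j + lam j + v j = x j + (gvec n i j + (if j \<le> i then 1 else 0)) + real_of_int s / real n - real_of_int q"
        using True unfolding lam_def v_def vv_def mzs by simp
      also have "\<dots> = x j + (real_of_int s + real i) / real n - real_of_int q"
        unfolding g by (simp add: add_divide_distrib)
      also have "\<dots> = x j" unfolding qr using n0 by simp
      finally show ?thesis by simp
    qed
  qed
  then have "x \<in> Ucell n i lam" unfolding Ucell_def using vV by blast
  then show ?thesis using iln lamL by blast
qed

theorem lemma4p1p2:
  fixes n :: nat
  assumes "n \<ge> 2"
  shows "Aff n = (\<Union>i<n. \<Union>x\<in>Lat n. Ucell n i x)
         \<and> (\<forall>i<n. \<forall>x\<in>Lat n.
              closedin (Metric_space.mtopology (Aff n) (l1dist n)) (Ucell n i x))"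
proof (intro conjI ballI allI impI)
  show "Aff n = (\<Union>i<n. \<Union>x\<in>Lat n. Ucell n i x)"
  proof
    show "Aff n \<subseteq> (\<Union>i<n. \<Union>x\<in>Lat n. Ucell n i x)"
      using cover[OF assms] by blast
    show "(\<Union>i<n. \<Union>x\<in>Lat n. Ucell n i x) \<subseteq> Aff n"
      using Ucell_Aff by blast
  qed
  fix i x assume "i < n" "x \<in> Lat n"
  then show "closedin (Metric_space.mtopology (Aff n) (l1dist n)) (Ucell n i x)"
    by (intro Ucell_closed)
qed

end
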